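(* Let $N\ge3$, $\frac{N}{N-1}<p<2$, $\xi=(p-1)(N-1)$, $\beta=\frac{p-1}{\xi-1}$, $\sigma=\frac{2-p}{p-1}$. There is a constant $C>0$ such that for every $t>0$ and every function $b$ on $(0,1]$ with $\sup_{0<r\le1}r^{\sigma+2}|b(r)|\le 1$, there is a solution $a_t$ of \[ -a_t''(r)-\frac{(N-1)a_t'(r)}{r}+\frac{p\,a_t'(r)}{\beta r+tr^{\xi}}=b(r),\quad 0<r<1,\qquad a_t(1)=0, \] satisfying $\sup_{0<r\le1}\{r^{\sigma}|a_t(r)|+r^{\sigma+1}|a_t'(r)|\}\le C$. *)

theory Defs
  imports Complex_Main
begin

end

theory Submission
  imports Defs "HOL-Analysis.Analysis"
begin

lemma powr_integral:
  fixes a b e :: real assumes "0 < a" "a \<le> b" "e \<noteq> -1"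
  shows "integral {a..b} (\<lambda>s. s powr e) = (b powr (e+1) - a powr (e+1)) / (e+1)"
proof -
  have "((\<lambda>s. s powr e) has_integral ((\<lambda>s. s powr (e+1)/(e+1)) b - (\<lambda>s. s powr (e+1)/(e+1)) a)) {a..b}"
  proof (rule fundamental_theorem_of_calculus[OF assms(2)])
    fix x assume x: "x \<in> {a..b}"
    then have "x > 0" using assms by auto
    have "((\<lambda>s. s powr (e+1)/(e+1)) has_real_derivative x powr e) (at x)"
      using \<open>x > 0\<close> assms(3)
      by (auto intro!: derivative_eq_intros)
    then show "((\<lambda>s. s powr (e+1)/(e+1)) has_vector_derivative x powr e) (at x within {a..b})"
      unfolding has_real_derivative_iff_has_vector_derivative[symmetric]
      by (rule has_field_derivative_at_within)
  qed
  then show ?thesis by (simp add: integral_unique diff_divide_distrib)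
qed

lemma int_deriv:
  fixes f :: "real \<Rightarrow> real"
  assumes "continuous_on {0<..1} f" "0 < x" "x \<le> 1"
  shows "((\<lambda>y. integral {y..1} f) has_real_derivative -f x) (at x within {0<..1})"
proof -
  have c: "continuous_on {x/2..1} f" using assms(1) by (rule continuous_on_subset) (use assms in auto)
  have "((\<lambda>y. integral {y..1} f) has_real_derivative -f x) (at x within {x/2..1})"
    by (rule integral_has_real_derivative'[OF c]) (use assms in auto)
  moreover have "at x within {x/2..1} = at x within {0<..1}"
    by (rule at_within_nhd[where S="{x/2<..<2}"]) (use assms in auto)
  ultimately show ?thesis by simp
qed

lemma int_deriv_open:
  fixes f :: "real \<Rightarrow> real"
  assumes "continuous_on {0<..1} f" "0 < x" "x < 1"
  shows "((\<lambda>y. integral {y..1} f) has_real_derivative -f x) (at x)"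
proof -
  have "at x within {0<..1} = at x within UNIV"
    by (rule at_within_nhd[where S="{0<..<1}"]) (use assms in auto)
  then show ?thesis using int_deriv[OF assms(1,2)] assms(3) by simp
qed

lemma int_cont:
  fixes f :: "real \<Rightarrow> real"
  assumes "continuous_on {0<..1} f"
  shows "continuous_on {0<..1} (\<lambda>y. integral {y..1} f)"
  by (rule DERIV_continuous_on[OF int_deriv[OF assms]]) auto


lemma alg1:
  fixes M D Q y bb N p :: real
  assumes "M \<noteq> 0" "y \<noteq> 0" "Q \<noteq> 0"
  shows "((- (M * bb)) * M - D * (M * ((N - 1) / y - p / Q))) / (M * M)
     = - bb - (N - 1) * (D / M) / y + p * (D / M) / Q"
  using assms by (simp add: field_simps)

lemma powr_split3:
  fixes y a b c :: real assumes "y > 0"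
  shows "y powr a / (y powr b * y powr c) = y powr (a - b - c)"
  using assms by (simp add: powr_diff powr_add[symmetric] diff_diff_eq)

lemma alg2:
  fixes A B Y E P Q :: real
  assumes "B \<noteq> 0" "E \<noteq> 0" "P \<noteq> 0" "Q \<noteq> 0"
  shows "(A * B * (Y / E)) / (P * (B * Q)) = A / E * (Y / (P * Q))"
  using assms by (simp add: field_simps)

lemma main:
  fixes N p t :: real and b :: "real \<Rightarrow> real"
  assumes hN: "N \<ge> 3" and hp1: "N / (N - 1) < p" and hp2: "p < 2"
    and ht: "t > 0" and hb: "continuous_on {0<..1} b"
    and hbb: "\<forall>r\<in>{0<..1}. r powr ((2 - p) / (p - 1) + 2) * \<bar>b r\<bar> \<le> 1"
  defines "\<xi> \<equiv> (p - 1) * (N - 1)"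
  defines "\<beta> \<equiv> (p - 1) / ((p - 1) * (N - 1) - 1)"
  defines "\<sigma> \<equiv> (2 - p) / (p - 1)"
  defines "m \<equiv> p / (p - 1)"
  defines "K \<equiv> 2 powr m * (1 / (\<xi> - 1) + 1 / (N - 2 - \<sigma>))"
  shows "\<exists>a a' a'' :: real \<Rightarrow> real.
        (\<forall>r\<in>{0<..1}. (a has_real_derivative a' r) (at r within {0<..1})) \<and>
        (\<forall>r\<in>{0<..<1}. (a' has_real_derivative a'' r) (at r)) \<and>
        (\<forall>r\<in>{0<..<1}.
           - a'' r - (N - 1) * a' r / r
           + p * a' r / ((p - 1) / ((p - 1) * (N - 1) - 1) * r
                         + t * r powr ((p - 1) * (N - 1))) = b r) \<and>
        a 1 = 0 \<and>
        (\<forall>r\<in>{0<..1}. r powr ((2 - p) / (p - 1)) * \<bar>a r\<bar>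
                        + r powr ((2 - p) / (p - 1) + 1) * \<bar>a' r\<bar> \<le> K / \<sigma> + K)"
proof -
  have N1: "N - 1 > 0" using hN by simp
  have "N / (N - 1) > 1" using N1 by (simp add: field_simps)
  then have p1: "p > 1" using hp1 by simp
  have "p * (N - 1) > N" using hp1 N1 by (simp add: field_simps)
  then have xi1: "\<xi> > 1" unfolding \<xi>_def by (simp add: algebra_simps)
  have bpos: "\<beta> > 0" unfolding \<beta>_def using p1 xi1 \<xi>_def by simp
  have beta_eq: "\<beta> = (p - 1) / (\<xi> - 1)" unfolding \<beta>_def \<xi>_def ..
  have sig0: "\<sigma> > 0" unfolding \<sigma>_def using p1 hp2 by simp
  have "1 / (p - 1) < N - 1" using xi1 p1 unfolding \<xi>_def by (simp add: field_simps)
  then have sigN: "\<sigma> < N - 2" unfolding \<sigma>_def using p1 by (simp add: field_simps)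
  have m0: "m > 0" unfolding m_def using p1 by simp
  have s2: "\<sigma> + 2 = m" unfolding \<sigma>_def m_def using p1 by (simp add: field_simps)
  have xm: "\<xi> * m = p * (N - 1)" unfolding \<xi>_def m_def using p1 by simp
  have E1: "N - 1 + (1 - \<xi>) * m - \<sigma> - 2 = - \<xi>"
  proof -
    have "N - 1 + (1 - \<xi>) * m - \<sigma> - 2 = N - 1 - \<xi> * m + (m - (\<sigma> + 2))" by (simp add: algebra_simps)
    also have "\<dots> = N - 1 - p * (N - 1)" using s2 xm by simp
    also have "\<dots> = - \<xi>" unfolding \<xi>_def by (simp add: algebra_simps)
    finally show ?thesis .
  qed
  have mb0: "m * \<beta> = p / (\<xi> - 1)" unfolding beta_eq m_def using p1 by simp
  have mb: "m * \<beta> * (1 - \<xi>) = - p"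
    unfolding mb0 using xi1 by (simp add: field_simps)
  have K0: "K > 0" unfolding K_def using xi1 sigN by (auto intro!: mult_pos_pos add_pos_pos)
  define w where "w s = \<beta> * s powr (1 - \<xi>) + t" for s
  define \<mu> where "\<mu> s = s powr (N - 1) * w s powr m" for s
  define f where "f s = \<mu> s * b s" for s
  define r0 where "r0 = min 1 ((\<beta> / t) powr (1 / (\<xi> - 1)))"
  define J where "J y = integral {y..1} f" for y
  define v where "v y = (J y - J r0) / \<mu> y" for y
  define a where "a y = - integral {y..1} v" for y
  define a2 where "a2 y = - b y - (N - 1) * v y / y + p * v y / (\<beta> * y + t * y powr \<xi>)" for y
  have wt: "w s \<ge> t" if "s > 0" for s unfolding w_def using bpos by simp
  have wb: "w s \<ge> \<beta> * s powr (1 - \<xi>)" if "s > 0" for s unfolding w_def using ht by simp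
  have wpos: "w s > 0" if "s > 0" for s using wt[OF that] ht by simp
  have mupos: "\<mu> s > 0" if "s > 0" for s unfolding \<mu>_def using wpos[OF that] that by simp
  have mucont: "continuous_on {0<..1} \<mu>"
  proof -
    have "\<beta> * s powr (1 - \<xi>) + t \<noteq> 0" if "s > 0" for s using wpos[OF that] unfolding w_def by simp
    then show ?thesis unfolding \<mu>_def w_def by (auto intro!: continuous_intros)
  qed
  have fcont: "continuous_on {0<..1} f"
    unfolding f_def by (intro continuous_intros mucont hb)
  have Jcont: "continuous_on {0<..1} J" unfolding J_def by (rule int_cont[OF fcont])
  have vcont: "continuous_on {0<..1} v"
  proof -
    have "\<forall>y\<in>{0<..1}. \<mu> y \<noteq> 0" using mupos by (metis greaterThanAtMost_iff less_irrefl)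
    then show ?thesis unfolding v_def by (intro continuous_on_divide continuous_intros Jcont mucont) auto
  qed
  have r0pos: "r0 > 0" unfolding r0_def using bpos ht by simp
  have r01: "r0 \<le> 1" unfolding r0_def by simp
  have muder: "(\<mu> has_real_derivative \<mu> y * ((N - 1) / y - p / (\<beta> * y + t * y powr \<xi>))) (at y)"
    if y: "y > 0" for y
  proof -
    have wy: "w y > 0" using wpos[OF y] .
    have "(\<mu> has_real_derivative ((N - 1) * y powr (N - 1 - 1) * w y powr m
        + y powr (N - 1) * (m * w y powr (m - 1) * (\<beta> * ((1 - \<xi>) * y powr (1 - \<xi> - 1)))))) (at y)"
      unfolding \<mu>_def w_def using y wy unfolding w_def
      by (auto intro!: derivative_eq_intros)
    moreover have "(N - 1) * y powr (N - 1 - 1) * w y powr m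
        + y powr (N - 1) * (m * w y powr (m - 1) * (\<beta> * ((1 - \<xi>) * y powr (1 - \<xi> - 1))))
        = \<mu> y * ((N - 1) / y - p / (\<beta> * y + t * y powr \<xi>))"
    proof -
      define Y where "Y = y powr \<xi>"
      have Y: "Y > 0" unfolding Y_def using y by simp
      have e1: "y powr (N - 1 - 1) = y powr (N - 1) / y" using y by (subst powr_diff) auto
      have e2: "w y powr (m - 1) = w y powr m / w y" using wy by (subst powr_diff) auto
      have e3: "y powr (1 - \<xi> - 1) = 1 / Y" unfolding Y_def using y by (simp add: powr_minus_divide)
      have e4: "y powr (1 - \<xi>) = y / Y" unfolding Y_def using y by (subst powr_diff) auto
      have e5: "w y * Y = \<beta> * y + t * Y" unfolding w_def e4 using Y by (simp add: field_simps)
      have "(N - 1) * y powr (N - 1 - 1) * w y powr m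
        + y powr (N - 1) * (m * w y powr (m - 1) * (\<beta> * ((1 - \<xi>) * y powr (1 - \<xi> - 1))))
        = \<mu> y * ((N - 1) / y + (m * \<beta> * (1 - \<xi>)) / (w y * Y))"
        unfolding e1 e2 e3 \<mu>_def using y wy Y by (simp add: field_simps)
      also have "\<dots> = \<mu> y * ((N - 1) / y - p / (\<beta> * y + t * Y))"
        unfolding mb e5 by simp
      finally show ?thesis unfolding Y_def .
    qed
    ultimately show ?thesis by simp
  qed
  have vder: "(v has_real_derivative a2 y) (at y)" if y: "0 < y" "y < 1" for y
  proof -
    have Jd: "(J has_real_derivative - f y) (at y)"
      unfolding J_def by (rule int_deriv_open[OF fcont y])
    have den: "\<beta> * y + t * y powr \<xi> > 0" using y bpos ht by (simp add: add_pos_pos)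
    have "(v has_real_derivative ((- f y) * \<mu> y - (J y - J r0) * (\<mu> y * ((N - 1) / y - p / (\<beta> * y + t * y powr \<xi>)))) / (\<mu> y * \<mu> y)) (at y)"
      unfolding v_def using mupos[of y] y
      by (auto intro!: derivative_eq_intros Jd muder)
    moreover have "((- f y) * \<mu> y - (J y - J r0) * (\<mu> y * ((N - 1) / y - p / (\<beta> * y + t * y powr \<xi>)))) / (\<mu> y * \<mu> y) = a2 y"
      unfolding a2_def v_def f_def using mupos[of y] y den by (intro alg1) auto
    ultimately show ?thesis by simp
  qed
  have hbb': "\<forall>r\<in>{0<..1}. r powr (\<sigma> + 2) * \<bar>b r\<bar> \<le> 1" using hbb unfolding \<sigma>_def .
  have bbd: "\<bar>b s\<bar> \<le> s powr (- \<sigma> - 2)" if s: "0 < s" "s \<le> 1" for s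
  proof -
    have "s powr (\<sigma> + 2) * \<bar>b s\<bar> \<le> 1" using hbb' s by auto
    then have "\<bar>b s\<bar> \<le> 1 / s powr (\<sigma> + 2)" using s by (simp add: field_simps)
    also have "\<dots> = s powr (- (\<sigma> + 2))" using powr_minus_divide[of s "\<sigma> + 2"] by simp
    finally show ?thesis by simp
  qed
  have intf: "f integrable_on {c..d}" if "0 < c" "d \<le> 1" for c d
    by (rule integrable_continuous_interval, rule continuous_on_subset[OF fcont]) (use that in auto)
  have Jsplit: "J c = integral {c..d} f + J d" if "0 < c" "c \<le> d" "d \<le> 1" for c d
    using Henstock_Kurzweil_Integration.integral_combine[OF that(2,3) intf[OF that(1) order_refl]] unfolding J_def by simp
  have Kge1: "2 powr m / (\<xi> - 1) \<le> K" unfolding K_def using sigN by (simp add: field_simps)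
  have Kge2: "2 powr m / (N - 2 - \<sigma>) \<le> K" unfolding K_def using xi1 by (simp add: field_simps)
  have pmb: "(2 * \<beta>) powr m = 2 powr m * \<beta> powr m" using bpos by (simp add: powr_mult)
  have pmt: "(2 * t) powr m = 2 powr m * t powr m" using ht by (simp add: powr_mult)
  have vb: "\<bar>v y\<bar> \<le> K * y powr (- \<sigma> - 1)" if y: "0 < y" "y \<le> 1" for y
  proof (cases "y \<le> r0")
    case True
    define g where "g s = (2 * \<beta>) powr m * s powr (- \<xi>)" for s
    have fg: "\<bar>f s\<bar> \<le> g s" if s: "s \<in> {y..r0}" for s
    proof -
      have s0: "s > 0" and s1: "s \<le> 1" using s y r01 by auto
      have "s \<le> (\<beta> / t) powr (1 / (\<xi> - 1))" using s unfolding r0_def by auto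
      then have "s powr (\<xi> - 1) \<le> ((\<beta> / t) powr (1 / (\<xi> - 1))) powr (\<xi> - 1)"
        using s0 xi1 by (intro powr_mono2) auto
      also have "\<dots> = \<beta> / t" using xi1 bpos ht by (simp add: powr_powr)
      finally have h1: "s powr (\<xi> - 1) \<le> \<beta> / t" .
      have h2: "s powr (1 - \<xi>) = 1 / s powr (\<xi> - 1)"
        using powr_minus_divide[of s "\<xi> - 1"] by simp
      have "t \<le> \<beta> * s powr (1 - \<xi>)" unfolding h2 using h1 s0 ht by (simp add: field_simps)
      then have "w s \<le> 2 * \<beta> * s powr (1 - \<xi>)" unfolding w_def by simp
      then have "w s powr m \<le> (2 * \<beta> * s powr (1 - \<xi>)) powr m"
        using wpos[OF s0] m0 by (intro powr_mono2) auto
      also have "\<dots> = (2 * \<beta>) powr m * s powr ((1 - \<xi>) * m)"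
        using bpos s0 by (simp add: powr_mult powr_powr)
      finally have h3: "w s powr m \<le> (2 * \<beta>) powr m * s powr ((1 - \<xi>) * m)" .
      have "\<bar>f s\<bar> = s powr (N - 1) * w s powr m * \<bar>b s\<bar>"
        unfolding f_def \<mu>_def by (simp add: abs_mult)
      also have "\<dots> \<le> s powr (N - 1) * ((2 * \<beta>) powr m * s powr ((1 - \<xi>) * m)) * s powr (- \<sigma> - 2)"
        by (intro mult_mono h3 bbd s0 s1 mult_left_mono) auto
      also have "\<dots> = (2 * \<beta>) powr m * (s powr (N - 1) * s powr ((1 - \<xi>) * m) * s powr (- \<sigma> - 2))"
        by (simp only: ac_simps)
      also have "\<dots> = (2 * \<beta>) powr m * s powr (N - 1 + (1 - \<xi>) * m + (- \<sigma> - 2))"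
        by (simp only: powr_add)
      also have "\<dots> = g s"
      proof -
        have E1': "N - 1 + (1 - \<xi>) * m + (- \<sigma> - 2) = - \<xi>" using E1 by linarith
        show ?thesis unfolding g_def E1' ..
      qed
      finally show ?thesis .
    qed
    have gint: "integral {y..r0} g = (2 * \<beta>) powr m * ((r0 powr (1 - \<xi>) - y powr (1 - \<xi>)) / (1 - \<xi>))"
      unfolding g_def using powr_integral[of y r0 "- \<xi>"] True y xi1 by simp
    have gi: "g integrable_on {y..r0}" unfolding g_def using y
      by (intro integrable_continuous_interval) (auto intro!: continuous_intros)
    have "\<bar>J y - J r0\<bar> = \<bar>integral {y..r0} f\<bar>" using Jsplit[OF y(1) True r01] by simp
    also have "\<dots> \<le> integral {y..r0} g"
      using integral_norm_bound_integral[OF intf[OF y(1) r01] gi] fg by simp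
    also have "\<dots> \<le> (2 * \<beta>) powr m * (y powr (1 - \<xi>) / (\<xi> - 1))"
    proof -
      have "(r0 powr (1 - \<xi>) - y powr (1 - \<xi>)) / (1 - \<xi>) = (y powr (1 - \<xi>) - r0 powr (1 - \<xi>)) / (\<xi> - 1)"
        by (simp add: divide_simps) (simp add: algebra_simps)
      also have "\<dots> \<le> y powr (1 - \<xi>) / (\<xi> - 1)"
        using xi1 by (intro divide_right_mono) auto
      finally show ?thesis unfolding gint by (intro mult_left_mono) auto
    qed
    finally have num: "\<bar>J y - J r0\<bar> \<le> (2 * \<beta>) powr m * (y powr (1 - \<xi>) / (\<xi> - 1))" .
    have "(\<beta> * y powr (1 - \<xi>)) powr m \<le> w y powr m"
      using wb[OF y(1)] bpos y m0 by (intro powr_mono2) auto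
    then have den: "y powr (N - 1) * (\<beta> powr m * y powr ((1 - \<xi>) * m)) \<le> \<mu> y"
      unfolding \<mu>_def using bpos y by (simp add: powr_mult powr_powr)
    have dpos: "0 < y powr (N - 1) * (\<beta> powr m * y powr ((1 - \<xi>) * m))" using bpos y by simp
    have "\<bar>v y\<bar> = \<bar>J y - J r0\<bar> / \<mu> y" unfolding v_def using mupos[OF y(1)] by simp
    also have "\<dots> \<le> ((2 * \<beta>) powr m * (y powr (1 - \<xi>) / (\<xi> - 1))) / (y powr (N - 1) * (\<beta> powr m * y powr ((1 - \<xi>) * m)))"
      by (rule frac_le[OF _ num dpos den]) (use xi1 bpos in simp)
    also have "\<dots> = 2 powr m / (\<xi> - 1) * (y powr (1 - \<xi>) / (y powr (N - 1) * y powr ((1 - \<xi>) * m)))"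
      unfolding pmb
      by (rule alg2) (use bpos xi1 y in auto)
    also have "\<dots> = 2 powr m / (\<xi> - 1) * y powr (- \<sigma> - 1)"
    proof -
      have E3: "1 - \<xi> - (N - 1) - (1 - \<xi>) * m = - \<sigma> - 1" using E1 by linarith
      show ?thesis unfolding powr_split3[OF y(1)] E3 ..
    qed
    also have "\<dots> \<le> K * y powr (- \<sigma> - 1)" by (intro mult_right_mono Kge1) auto
    finally show ?thesis .
  next
    case False
    then have r0y: "r0 < y" by simp
    then have r0e: "r0 = (\<beta> / t) powr (1 / (\<xi> - 1))" using y unfolding r0_def by auto
    define g where "g s = (2 * t) powr m * s powr (N - 3 - \<sigma>)" for s
    have fg: "\<bar>f s\<bar> \<le> g s" if s: "s \<in> {r0..y}" for s
    proof -
      have s0: "s > 0" and s1: "s \<le> 1" using s y r0pos by auto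
      have "r0 powr (\<xi> - 1) \<le> s powr (\<xi> - 1)"
        using s r0pos xi1 by (intro powr_mono2) auto
      moreover have "r0 powr (\<xi> - 1) = \<beta> / t" unfolding r0e using xi1 bpos ht by (simp add: powr_powr)
      ultimately have h1: "\<beta> / t \<le> s powr (\<xi> - 1)" by simp
      have h2: "s powr (1 - \<xi>) = 1 / s powr (\<xi> - 1)"
        using powr_minus_divide[of s "\<xi> - 1"] by simp
      have "\<beta> * s powr (1 - \<xi>) \<le> t" unfolding h2 using h1 s0 ht by (simp add: field_simps)
      then have "w s \<le> 2 * t" unfolding w_def by simp
      then have h3: "w s powr m \<le> (2 * t) powr m"
        using wpos[OF s0] m0 by (intro powr_mono2) auto
      have "\<bar>f s\<bar> = s powr (N - 1) * w s powr m * \<bar>b s\<bar>"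
        unfolding f_def \<mu>_def by (simp add: abs_mult)
      also have "\<dots> \<le> s powr (N - 1) * ((2 * t) powr m) * s powr (- \<sigma> - 2)"
        by (intro mult_mono h3 bbd s0 s1 mult_left_mono) auto
      also have "\<dots> = (2 * t) powr m * (s powr (N - 1) * s powr (- \<sigma> - 2))"
        by (simp only: ac_simps)
      also have "\<dots> = (2 * t) powr m * s powr (N - 1 + (- \<sigma> - 2))"
        by (simp only: powr_add)
      also have "\<dots> = g s"
      proof -
        have E2: "N - 1 + (- \<sigma> - 2) = N - 3 - \<sigma>" by linarith
        show ?thesis unfolding g_def E2 ..
      qed
      finally show ?thesis .
    qed
    have gint: "integral {r0..y} g = (2 * t) powr m * ((y powr (N - 2 - \<sigma>) - r0 powr (N - 2 - \<sigma>)) / (N - 2 - \<sigma>))"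
      unfolding g_def using powr_integral[of r0 y "N - 3 - \<sigma>"] r0y r0pos sigN by (simp add: algebra_simps)
    have gi: "g integrable_on {r0..y}" unfolding g_def using r0pos
      by (intro integrable_continuous_interval) (auto intro!: continuous_intros)
    have "\<bar>J y - J r0\<bar> = \<bar>integral {r0..y} f\<bar>" using Jsplit[OF r0pos _ y(2)] r0y by simp
    also have "\<dots> \<le> integral {r0..y} g"
      using integral_norm_bound_integral[OF intf[OF r0pos y(2)] gi] fg by simp
    also have "\<dots> \<le> (2 * t) powr m * (y powr (N - 2 - \<sigma>) / (N - 2 - \<sigma>))"
      unfolding gint using sigN r0pos by (intro mult_left_mono divide_right_mono) auto
    finally have num: "\<bar>J y - J r0\<bar> \<le> (2 * t) powr m * (y powr (N - 2 - \<sigma>) / (N - 2 - \<sigma>))" .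
    have "t powr m \<le> w y powr m"
      using wt[OF y(1)] ht m0 by (intro powr_mono2) auto
    then have den: "y powr (N - 1) * t powr m \<le> \<mu> y"
      unfolding \<mu>_def using y by simp
    have dpos: "0 < y powr (N - 1) * t powr m" using ht y by simp
    have "\<bar>v y\<bar> = \<bar>J y - J r0\<bar> / \<mu> y" unfolding v_def using mupos[OF y(1)] by simp
    also have "\<dots> \<le> ((2 * t) powr m * (y powr (N - 2 - \<sigma>) / (N - 2 - \<sigma>))) / (y powr (N - 1) * t powr m)"
      by (rule frac_le[OF _ num dpos den]) (use sigN ht y in simp)
    also have "\<dots> = 2 powr m / (N - 2 - \<sigma>) * (y powr (N - 2 - \<sigma>) / (y powr (N - 1) * y powr 0))"
      unfolding pmt
      using alg2[of "t powr m" "N - 2 - \<sigma>" "y powr (N - 1)" "1" "2 powr m" "y powr (N - 2 - \<sigma>)"] ht y sigN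
      by simp
    also have "\<dots> = 2 powr m / (N - 2 - \<sigma>) * y powr (- \<sigma> - 1)"
    proof -
      have E3: "N - 2 - \<sigma> - (N - 1) - 0 = - \<sigma> - 1" by linarith
      show ?thesis unfolding powr_split3[OF y(1)] E3 ..
    qed
    also have "\<dots> \<le> K * y powr (- \<sigma> - 1)" by (intro mult_right_mono Kge2) auto
    finally show ?thesis .
  qed
  have ab: "\<bar>a y\<bar> \<le> K / \<sigma> * y powr (- \<sigma>)" if y: "0 < y" "y \<le> 1" for y
  proof -
    have vi: "v integrable_on {y..1}"
      by (rule integrable_continuous_interval, rule continuous_on_subset[OF vcont]) (use y in auto)
    have gi: "(\<lambda>s. K * s powr (- \<sigma> - 1)) integrable_on {y..1}"
      using y by (intro integrable_continuous_interval) (auto intro!: continuous_intros)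
    have gint: "integral {y..1} (\<lambda>s. K * s powr (- \<sigma> - 1)) = K * ((1 - y powr (- \<sigma>)) / (- \<sigma>))"
      using powr_integral[of y 1 "- \<sigma> - 1"] y sig0 by simp
    have "\<bar>a y\<bar> = \<bar>integral {y..1} v\<bar>" unfolding a_def by simp
    also have "\<dots> \<le> integral {y..1} (\<lambda>s. K * s powr (- \<sigma> - 1))"
      using integral_norm_bound_integral[OF vi gi] vb y by auto
    also have "\<dots> = K / \<sigma> * y powr (- \<sigma>) - K / \<sigma>"
      unfolding gint using sig0 by (simp add: field_simps)
    also have "\<dots> \<le> K / \<sigma> * y powr (- \<sigma>)" using K0 sig0 by simp
    finally show ?thesis .
  qed
  have final: "y powr \<sigma> * \<bar>a y\<bar> + y powr (\<sigma> + 1) * \<bar>v y\<bar> \<le> K / \<sigma> + K" if y: "0 < y" "y \<le> 1" for y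
  proof -
    have "y powr \<sigma> * \<bar>a y\<bar> \<le> y powr \<sigma> * (K / \<sigma> * y powr (- \<sigma>))"
      by (intro mult_left_mono ab y) auto
    also have "\<dots> = K / \<sigma> * (y powr \<sigma> * y powr (- \<sigma>))" by simp
    also have "\<dots> = K / \<sigma>" using y by (simp add: powr_add[symmetric])
    finally have 1: "y powr \<sigma> * \<bar>a y\<bar> \<le> K / \<sigma>" .
    have "y powr (\<sigma> + 1) * \<bar>v y\<bar> \<le> y powr (\<sigma> + 1) * (K * y powr (- \<sigma> - 1))"
      by (intro mult_left_mono vb y) auto
    also have "\<dots> = K * (y powr (\<sigma> + 1) * y powr (- \<sigma> - 1))" by simp
    also have "\<dots> = K" using y by (simp add: powr_add[symmetric])
    finally have 2: "y powr (\<sigma> + 1) * \<bar>v y\<bar> \<le> K" .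
    show ?thesis using 1 2 by simp
  qed
  show ?thesis
  proof (intro exI conjI ballI)
    fix r :: real assume r: "r \<in> {0<..1}"
    have "((\<lambda>y. integral {y..1} v) has_real_derivative - v r) (at r within {0<..1})"
      by (rule int_deriv[OF vcont]) (use r in auto)
    from DERIV_minus[OF this] show "(a has_real_derivative v r) (at r within {0<..1})"
      unfolding a_def by simp
  next
    fix r :: real assume r: "r \<in> {0<..<1}"
    then show "(v has_real_derivative a2 r) (at r)" by (intro vder) auto
  next
    fix r :: real assume r: "r \<in> {0<..<1}"
    show "- a2 r - (N - 1) * v r / r + p * v r / ((p - 1) / ((p - 1) * (N - 1) - 1) * r
                         + t * r powr ((p - 1) * (N - 1))) = b r"
      unfolding a2_def \<beta>_def \<xi>_def by simp
  next
    show "a 1 = 0" unfolding a_def by simp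
  next
    fix r :: real assume r: "r \<in> {0<..1}"
    show "r powr ((2 - p) / (p - 1)) * \<bar>a r\<bar> + r powr ((2 - p) / (p - 1) + 1) * \<bar>v r\<bar> \<le> K / \<sigma> + K"
      using final[of r] r unfolding \<sigma>_def by auto
  qed
qed

lemma Cpos:
  fixes N p :: real
  assumes hN: "N \<ge> 3" and hp1: "N / (N - 1) < p" and hp2: "p < 2"
  shows "0 < 2 powr (p / (p - 1)) * (1 / ((p - 1) * (N - 1) - 1) + 1 / (N - 2 - (2 - p) / (p - 1))) / ((2 - p) / (p - 1))
         + 2 powr (p / (p - 1)) * (1 / ((p - 1) * (N - 1) - 1) + 1 / (N - 2 - (2 - p) / (p - 1)))"
proof -
  have N1: "N - 1 > 0" using hN by simp
  have "N / (N - 1) > 1" using N1 by (simp add: field_simps)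
  then have p1: "p > 1" using hp1 by simp
  have "p * (N - 1) > N" using hp1 N1 by (simp add: field_simps)
  then have xi1: "(p - 1) * (N - 1) > 1" by (simp add: algebra_simps)
  have sig0: "(2 - p) / (p - 1) > 0" using p1 hp2 by simp
  have "1 / (p - 1) < N - 1" using xi1 p1 by (simp add: field_simps)
  then have sigN: "(2 - p) / (p - 1) < N - 2" using p1 by (simp add: field_simps)
  have K0: "2 powr (p / (p - 1)) * (1 / ((p - 1) * (N - 1) - 1) + 1 / (N - 2 - (2 - p) / (p - 1))) > 0"
    using xi1 sigN by (intro mult_pos_pos add_pos_pos) auto
  show ?thesis using add_pos_pos[OF divide_pos_pos[OF K0 sig0] K0] .
qed

theorem lemma2p7:
  fixes N :: nat and p :: real
  assumes "N \<ge> 3"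
    and "real N / (real N - 1) < p" and "p < 2"
  shows "\<exists>C>0. \<forall>t>0. \<forall>b :: real \<Rightarrow> real.
     continuous_on {0<..1} b \<longrightarrow>
     (\<forall>r\<in>{0<..1}. r powr ((2 - p) / (p - 1) + 2) * \<bar>b r\<bar> \<le> 1) \<longrightarrow>
     (\<exists>a a' a'' :: real \<Rightarrow> real.
        (\<forall>r\<in>{0<..1}. (a has_real_derivative a' r) (at r within {0<..1})) \<and>
        (\<forall>r\<in>{0<..<1}. (a' has_real_derivative a'' r) (at r)) \<and>
        (\<forall>r\<in>{0<..<1}.
           - a'' r - (real N - 1) * a' r / r
           + p * a' r / ((p - 1) / ((p - 1) * (real N - 1) - 1) * r
                         + t * r powr ((p - 1) * (real N - 1))) = b r) \<and>
        a 1 = 0 \<and>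
        (\<forall>r\<in>{0<..1}. r powr ((2 - p) / (p - 1)) * \<bar>a r\<bar>
                        + r powr ((2 - p) / (p - 1) + 1) * \<bar>a' r\<bar> \<le> C))"
proof -
  have N3: "real N \<ge> 3" using assms(1) by simp
  show ?thesis
    apply (rule exI, rule conjI, rule Cpos[OF N3 assms(2,3)])
    apply (intro allI impI)
    apply (rule main[OF N3 assms(2,3)])
    apply auto
    done
qed

end
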